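(* For $\alpha\in(0,\pi)$ let $\widehat{\mathfrak{K}}_\alpha$ denote the analytic extension to $\mathbb{C}\setminus\mathfrak{S}$, where $\mathfrak{S}:=(1/4+\mathbb{N})\cup(-1/4-\mathbb{N})$, of the Mellin transform $\lambda\mapsto\int_0^\infty\mathfrak{K}_\alpha(r)r^{-\lambda}\,dr/r$ of $\mathfrak{K}_\alpha(\tau):=\big(4\sin^2(\alpha)+(\sqrt\tau-1/\sqrt\tau)^2\big)^{-1/4}$. Then for all $\mu\in\mathbb{R}$ and all $p\ge0$, $$\lim_{\xi\to+\infty}|\widehat{\mathfrak{K}}_\alpha(\mu\pm\imath\xi)|^2|\xi|^{2p}=0.$$
   Context: The Mellin transform $\lambda\mapsto\int_0^\infty\mathfrak{K}_\alpha(r)r^{-\lambda}dr/r$ converges and is analytic for $|\mathrm{Re}\,\lambda|<1/4$ and admits an analytic extension to $\mathbb{C}\setminus\mathfrak{S}$ with simple poles at the points of $\mathfrak{S}$; $\mathbb{N}=\{0,1,2,\dots\}$. *)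

theory Defs
  imports "HOL-Complex_Analysis.Complex_Analysis"
begin

definition Kfrak :: "real \<Rightarrow> real \<Rightarrow> real" where
  "Kfrak \<alpha> \<tau> = (4 * (sin \<alpha>)\<^sup>2 + (sqrt \<tau> - 1 / sqrt \<tau>)\<^sup>2) powr (-1/4)"

definition mellinK :: "real \<Rightarrow> complex \<Rightarrow> complex" where
  "mellinK \<alpha> s =
     set_lebesgue_integral lborel {0<..}
       (\<lambda>r. complex_of_real (Kfrak \<alpha> r) * (complex_of_real r powr (-s)) / complex_of_real r)"

definition Sfrak :: "complex set" where
  "Sfrak = {complex_of_real (1/4 + real n) | n. True} \<union> {complex_of_real (-1/4 - real n) | n. True}"

end

theory Submission
  imports Defs "HOL-Computational_Algebra.Polynomial"
begin

definition pw :: "real \<Rightarrow> real \<Rightarrow> real \<Rightarrow> real" where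
  "pw a b r = (if r \<le> 1 then r powr a else r powr b)"

lemma pw_nonneg: "pw a b r \<ge> 0" by (simp add: pw_def)

lemma pw_meas[measurable]: "pw a b \<in> borel_measurable borel"
  unfolding pw_def by measurable

lemma pw_has_integral:
  assumes "a > -1" "b < -1"
  shows "(pw a b has_integral (1/(a+1) - 1/(b+1))) {0<..}"
proof -
  have 10: "((\<lambda>x. x powr a) has_integral (1/(a+1))) {0..1}"
    using has_integral_powr_from_0[OF assms(1), of 1] by simp
  have 1: "(pw a b has_integral (1/(a+1))) {0..1}"
    by (subst has_integral_cong[of _ _ "\<lambda>x. x powr a"]) (use 10 in \<open>auto simp: pw_def\<close>)
  have 20: "((\<lambda>x. x powr b) has_integral (-(1/(b+1)))) {1..}"
    using has_integral_powr_to_inf[OF assms(2), of 1] by simp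
  have 2: "(pw a b has_integral (-(1/(b+1)))) {1..}"
    by (subst has_integral_cong[of _ _ "\<lambda>x. x powr b"]) (use 20 in \<open>auto simp: pw_def\<close>)
  have "(pw a b has_integral (1/(a+1) + -(1/(b+1)))) ({0..1} \<union> {1..})"
    by (rule has_integral_Un[OF 1 2]) auto
  moreover have "{0..1} \<union> {1..} = {0::real..}" by auto
  ultimately have 3: "(pw a b has_integral (1/(a+1) - 1/(b+1))) {0..}" by simp
  have "(pw a b has_integral v) {0..} \<longleftrightarrow> (pw a b has_integral v) {0<..}" for v
    by (rule has_integral_spike_set_eq; rule negligible_subset[of "{0}"]; auto)
  with 3 show ?thesis by blast
qed

lemma pw_set_integrable:
  assumes "a > -1" "b < -1"
  shows "set_integrable lborel {0<..} (pw a b)"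
    and "(LINT r:{0<..}|lborel. pw a b r) = 1/(a+1) - 1/(b+1)"
proof -
  have "pw a b absolutely_integrable_on {0<..}"
    using pw_has_integral[OF assms] pw_nonneg
    by (intro nonnegative_absolutely_integrable_1) auto
  then show si: "set_integrable lborel {0<..} (pw a b)"
    unfolding set_integrable_def
    by (subst integrable_completion[symmetric]) auto
  show "(LINT r:{0<..}|lborel. pw a b r) = 1/(a+1) - 1/(b+1)"
    using set_borel_integral_eq_integral(2)[OF si] pw_has_integral[OF assms]
    by (simp add: integral_unique)
qed

lemma cpow_pos: "r > 0 \<Longrightarrow> complex_of_real r powr z = exp (z * of_real (ln r))"
  by (simp add: powr_def Ln_of_real)

lemma norm_cpow: "r > 0 \<Longrightarrow> norm (complex_of_real r powr z) = r powr Re z"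
  by (subst norm_powr_real_powr) auto

definition mi :: "(real \<Rightarrow> real) \<Rightarrow> complex \<Rightarrow> real \<Rightarrow> complex" where
  "mi g s r = complex_of_real (g r) * (complex_of_real r powr (-s)) / complex_of_real r"

definition Mel :: "(real \<Rightarrow> real) \<Rightarrow> complex \<Rightarrow> complex" where
  "Mel g s = set_lebesgue_integral lborel {0<..} (mi g s)"

definition good :: "(real \<Rightarrow> real) \<Rightarrow> real \<Rightarrow> real \<Rightarrow> real \<Rightarrow> bool" where
  "good g A B C \<longleftrightarrow> C \<ge> 0 \<and> continuous_on {0<..} g \<and>
     (\<forall>r. 0 < r \<and> r \<le> 1 \<longrightarrow> \<bar>g r\<bar> \<le> C * r powr A) \<and>
     (\<forall>r. 1 \<le> r \<longrightarrow> \<bar>g r\<bar> \<le> C * r powr (-B))"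

lemma mi_norm: "r > 0 \<Longrightarrow> norm (mi g s r) = \<bar>g r\<bar> * r powr (- Re s) / r"
  by (simp add: mi_def norm_mult norm_divide norm_cpow)

lemma powr_m1: "(r::real) > 0 \<Longrightarrow> r powr x * r powr y / r = r powr (x + y - 1)"
  by (simp add: powr_add powr_diff)

lemma mi_bound:
  assumes g: "good g A B C" and r: "r > 0" and m: "m1 \<le> Re s" "Re s \<le> m2"
  shows "norm (mi g s r) \<le> C * pw (A - m2 - 1) (-B - m1 - 1) r"
proof (cases "r \<le> 1")
  case True
  have "\<bar>g r\<bar> \<le> C * r powr A" using g r True by (auto simp: good_def)
  moreover have "r powr (- Re s) \<le> r powr (-m2)"
    using r True m by (intro powr_mono') auto
  ultimately have "\<bar>g r\<bar> * r powr (- Re s) / r \<le> C * r powr A * r powr (-m2) / r"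
    using r by (intro divide_right_mono mult_mono) auto
  also have "\<dots> = C * (r powr A * r powr (-m2) / r)" by simp
  also have "\<dots> = C * r powr (A - m2 - 1)" using powr_m1[OF r, of A "-m2"] by simp
  finally show ?thesis using r True by (simp add: mi_norm pw_def)
next
  case False
  have "\<bar>g r\<bar> \<le> C * r powr (-B)" using g r False by (auto simp: good_def)
  moreover have "r powr (- Re s) \<le> r powr (-m1)"
    using r False m by (intro powr_mono) auto
  ultimately have "\<bar>g r\<bar> * r powr (- Re s) / r \<le> C * r powr (-B) * r powr (-m1) / r"
    using r by (intro divide_right_mono mult_mono) auto
  also have "\<dots> = C * (r powr (-B) * r powr (-m1) / r)" by simp
  also have "\<dots> = C * r powr (-B - m1 - 1)" using powr_m1[OF r, of "-B" "-m1"] by simp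
  finally show ?thesis using r False by (simp add: mi_norm pw_def)
qed

lemma mi_cont:
  assumes "continuous_on {0<..} g"
  shows "continuous_on {0<..} (mi g s)"
proof -
  have "continuous_on {0<..} (\<lambda>r. complex_of_real (g r) * exp (-s * of_real (ln r)) / complex_of_real r)"
    using assms by (intro continuous_intros) auto
  then show ?thesis
    by (rule continuous_on_cong[THEN iffD1, rotated 2]) (auto simp: mi_def cpow_pos)
qed

lemma mi_meas:
  assumes "continuous_on {0<..} g"
  shows "set_borel_measurable lborel {0<..} (mi g s)"
  unfolding set_borel_measurable_def
  using borel_measurable_continuous_on_indicator[OF _ mi_cont[OF assms]] by simp

lemma Mel_integrable:
  assumes g: "good g A B C" and s: "-B < Re s" "Re s < A"
  shows "set_integrable lborel {0<..} (mi g s)"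
proof (rule set_integrable_bound)
  show "set_integrable lborel {0<..} (\<lambda>r. C * pw (A - Re s - 1) (-B - Re s - 1) r)"
    using pw_set_integrable(1)[of "A - Re s - 1" "-B - Re s - 1"] s by simp
  show "set_borel_measurable lborel {0<..} (mi g s)"
    using g by (intro mi_meas) (auto simp: good_def)
  show "AE x in lborel. x \<in> {0<..} \<longrightarrow> norm (mi g s x) \<le> norm (C * pw (A - Re s - 1) (- B - Re s - 1) x)"
    using mi_bound[OF g, of _ "Re s" s "Re s"] g pw_nonneg
    by (intro AE_I2) (auto simp: good_def)
qed

lemma Mel_norm:
  assumes g: "good g A B C" and s: "-B < Re s" "Re s < A"
  shows "norm (Mel g s) \<le> C * (1/(A - Re s) - 1/(-B - Re s))"
proof -
  have si: "set_integrable lborel {0<..} (\<lambda>r. C * pw (A - Re s - 1) (-B - Re s - 1) r)"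
    using pw_set_integrable(1)[of "A - Re s - 1" "-B - Re s - 1"] s by simp
  have "norm (Mel g s) \<le> (LINT r:{0<..}|lborel. norm (mi g s r))"
    unfolding Mel_def by (rule set_integral_norm_bound[OF Mel_integrable[OF assms]])
  also have "\<dots> \<le> (LINT r:{0<..}|lborel. C * pw (A - Re s - 1) (-B - Re s - 1) r)"
    by (rule set_integral_mono[OF _ si]) (use Mel_integrable[OF assms] mi_bound[OF g, of _ "Re s" s "Re s"] in \<open>auto intro: set_integrable_norm\<close>)
  also have "\<dots> = C * (1/(A - Re s) - 1/(-B - Re s))"
    using pw_set_integrable(2)[of "A - Re s - 1" "-B - Re s - 1"] s by simp
  finally show ?thesis .
qed

lemma cpow_m1: "r > 0 \<Longrightarrow> complex_of_real r powr (z - 1) = complex_of_real r powr z / complex_of_real r"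
proof -
  assume r: "r > 0"
  have "exp ((z - 1) * of_real (ln r)) = exp (z * of_real (ln r)) / exp (of_real (ln r))"
    by (simp add: algebra_simps exp_diff)
  also have "exp (complex_of_real (ln r)) = of_real r"
    using r by (subst exp_of_real) simp
  finally show ?thesis using r by (simp add: cpow_pos)
qed

lemma lim_right0:
  assumes "e > 0" "C \<ge> 0"
    and "\<And>r. 0 < r \<Longrightarrow> r \<le> 1 \<Longrightarrow> norm (F r) \<le> C * r powr e"
  shows "((F::real \<Rightarrow> complex) \<longlongrightarrow> 0) (at_right 0)"
proof (rule Lim_null_comparison)
  show "\<forall>\<^sub>F r in at_right 0. norm (F r) \<le> C * r powr e"
    unfolding eventually_at_right_field using assms(3) by (intro exI[of _ 1]) auto
  have "((\<lambda>r::real. r powr e) \<longlongrightarrow> 0 powr e) (at_right 0)"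
    using assms(1) by (intro tendsto_powr' tendsto_ident_at tendsto_const) (auto simp: eventually_at_right_field intro: exI[of _ 1])
  then have "((\<lambda>r::real. C * r powr e) \<longlongrightarrow> C * 0) (at_right 0)"
    by (intro tendsto_mult tendsto_const) simp
  then show "((\<lambda>r::real. C * r powr e) \<longlongrightarrow> 0) (at_right 0)" by simp
qed

lemma lim_top:
  assumes "e < 0" "C \<ge> 0"
    and "\<And>r. 1 \<le> r \<Longrightarrow> norm (F r) \<le> C * r powr e"
  shows "((F::real \<Rightarrow> complex) \<longlongrightarrow> 0) at_top"
proof (rule Lim_null_comparison)
  show "\<forall>\<^sub>F r in at_top. norm (F r) \<le> C * r powr e"
    unfolding eventually_at_top_linorder using assms(3) by (intro exI[of _ 1]) auto
  have "((\<lambda>r::real. r powr e) \<longlongrightarrow> 0) at_top"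
    using assms(1) by (intro tendsto_neg_powr filterlim_ident)
  then have "((\<lambda>r::real. C * r powr e) \<longlongrightarrow> C * 0) at_top"
    by (intro tendsto_mult tendsto_const)
  then show "((\<lambda>r::real. C * r powr e) \<longlongrightarrow> 0) at_top" by simp
qed

lemma Mel_parts:
  assumes g: "good g A B C" and g1: "good g1 A B C1"
    and d: "\<And>r. r > 0 \<Longrightarrow> (g has_real_derivative g1 r / r) (at r)"
    and s: "-B < Re s" "Re s < A"
  shows "Mel g1 s = s * Mel g s"
proof -
  define F where "F r = complex_of_real (g r) * complex_of_real r powr (-s)" for r
  define f where "f r = mi g1 s r - s * mi g s r" for r
  have deriv: "(F has_vector_derivative f r) (at r)" if r: "r > 0" for r
  proof -
    have 1: "((\<lambda>x. complex_of_real x powr (-s)) has_vector_derivative (-s * complex_of_real r powr (-s - 1))) (at r)"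
      by (rule has_vector_derivative_real_field[OF has_field_derivative_powr]) (use r in auto)
    have 2: "((\<lambda>x. complex_of_real (g x)) has_vector_derivative complex_of_real (g1 r / r)) (at r)"
      by (rule has_vector_derivative_of_real[OF d[OF r]])
    have "(F has_vector_derivative (complex_of_real (g r) * (-s * complex_of_real r powr (-s - 1)) + complex_of_real (g1 r / r) * complex_of_real r powr (-s))) (at r)"
      unfolding F_def by (rule has_vector_derivative_mult[OF 2 1])
    moreover have "complex_of_real (g r) * (-s * complex_of_real r powr (-s - 1)) + complex_of_real (g1 r / r) * complex_of_real r powr (-s) = f r"
      using r by (simp add: f_def mi_def cpow_m1 field_simps)
    ultimately show ?thesis by simp
  qed
  have cg: "continuous_on {0<..} g" "continuous_on {0<..} g1" using g g1 by (auto simp: good_def)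
  have "continuous_on {0<..} f"
    unfolding f_def by (intro continuous_intros mi_cont cg)
  then have cont: "isCont f r" if "r > 0" for r
    using that continuous_on_eq_continuous_at[of "{0<..}" f] by auto
  have i1: "set_integrable lborel {0<..} (mi g1 s)" by (rule Mel_integrable[OF g1 s])
  have i2: "set_integrable lborel {0<..} (mi g s)" by (rule Mel_integrable[OF g s])
  have int: "set_integrable lborel {0<..} f"
    unfolding f_def using i1 i2 by (intro set_integral_diff(1) set_integrable_mult_right) auto
  have Fn: "norm (F r) = \<bar>g r\<bar> * r powr (- Re s)" if "r > 0" for r
    using that by (simp add: F_def norm_mult norm_cpow)
  have C: "C \<ge> 0" using g by (simp add: good_def)
  have limA: "(F \<longlongrightarrow> 0) (at_right 0)"
  proof (rule lim_right0[of "A - Re s" C])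
    fix r :: real assume r: "0 < r" "r \<le> 1"
    have "\<bar>g r\<bar> * r powr (- Re s) \<le> C * r powr A * r powr (- Re s)"
      using g r by (intro mult_right_mono) (auto simp: good_def)
    also have "\<dots> = C * r powr (A - Re s)" by (simp add: powr_add[symmetric] mult.assoc)
    finally show "norm (F r) \<le> C * r powr (A - Re s)" using Fn r by simp
  qed (use s C in auto)
  have limB: "(F \<longlongrightarrow> 0) at_top"
  proof (rule lim_top[of "-B - Re s" C])
    fix r :: real assume r: "1 \<le> r"
    have "\<bar>g r\<bar> * r powr (- Re s) \<le> C * r powr (-B) * r powr (- Re s)"
      using g r by (intro mult_right_mono) (auto simp: good_def)
    also have "\<dots> = C * r powr (-B - Re s)" by (simp add: powr_add[symmetric] mult.assoc)
    finally show "norm (F r) \<le> C * r powr (-B - Re s)" using Fn r by simp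
  qed (use s C in auto)
  have "(LBINT x=0..\<infinity>. f x) = 0 - 0"
  proof (rule interval_integral_FTC_integrable)
    show "set_integrable lborel (einterval 0 \<infinity>) f" using int by (simp add: zero_ereal_def)
    show "((F \<circ> real_of_ereal) \<longlongrightarrow> 0) (at_right 0)"
      using limA ereal_tendsto_simps1(2)[of F 0 0] by (simp add: zero_ereal_def)
    show "((F \<circ> real_of_ereal) \<longlongrightarrow> 0) (at_left \<infinity>)"
      using limB ereal_tendsto_simps1(3)[of F 0] by simp
  qed (use deriv cont in \<open>auto simp: zero_ereal_def\<close>)
  then have "(LINT x:{0<..}|lborel. f x) = 0"
    by (simp add: interval_lebesgue_integral_def zero_ereal_def)
  moreover have "(LINT x:{0<..}|lborel. f x) = Mel g1 s - s * Mel g s"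
    unfolding f_def Mel_def using i1 i2 by (simp add: set_integral_diff(2))
  ultimately show ?thesis by simp
qed

lemma ln_le_powr: fixes x d :: real assumes "x > 0" "d > 0" shows "ln x \<le> x powr d / d"
proof -
  have "d * ln x = ln (x powr d)" using assms by (simp add: ln_powr)
  also have "\<dots> \<le> x powr d - 1" using assms by (intro ln_le_minus_one) auto
  finally have "d * ln x \<le> x powr d" by simp
  then show ?thesis using assms by (simp add: field_simps)
qed

lemma abs_ln_le: assumes "r > 0" "d > 0" shows "\<bar>ln r\<bar> \<le> pw (-d) d r / d"
proof (cases "r \<le> 1")
  case True
  have "ln (1/r) \<le> (1/r) powr d / d" using assms by (intro ln_le_powr) auto
  moreover have "(1/r) powr d = r powr (-d)" using assms by (simp add: powr_divide powr_minus_divide)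
  ultimately show ?thesis using True assms by (simp add: pw_def ln_div abs_if)
next
  case False
  then show ?thesis using ln_le_powr[of r d] assms by (simp add: pw_def)
qed

lemma pw_mult: "r > 0 \<Longrightarrow> pw a b r * pw c d r = pw (a + c) (b + d) r"
  by (simp add: pw_def powr_add)

lemma mi_deriv:
  assumes "r > 0"
  shows "((\<lambda>w. mi g w r) has_field_derivative (- of_real (ln r) * mi g w r)) (at w within S)"
proof -
  have "((\<lambda>w. complex_of_real (g r) * exp (-w * of_real (ln r)) / complex_of_real r) has_field_derivative
         (- of_real (ln r) * (complex_of_real (g r) * exp (-w * of_real (ln r)) / complex_of_real r))) (at w within S)"
    using assms by (auto intro!: derivative_eq_intros simp: field_simps)
  then show ?thesis using assms by (simp add: mi_def cpow_pos)
qed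

lemma Mel_holo:
  assumes g: "good g A B C"
  shows "Mel g holomorphic_on {s. -B < Re s \<and> Re s < A}"
  unfolding holomorphic_on_def
proof (intro ballI)
  fix s0 assume "s0 \<in> {s. -B < Re s \<and> Re s < A}"
  then have s0: "-B < Re s0" "Re s0 < A" by auto
  define \<mu> where "\<mu> = Re s0"
  define \<delta> where "\<delta> = min (A - \<mu>) (B + \<mu>) / 4"
  have \<delta>: "\<delta> > 0" "\<delta> \<le> (A - \<mu>)/4" "\<delta> \<le> (B + \<mu>)/4" using s0 by (auto simp: \<delta>_def \<mu>_def)
  have C: "C \<ge> 0" and cg: "continuous_on {0<..} g" using g by (auto simp: good_def)
  define W where "W r = C / \<delta> * pw (A - \<mu> - 2*\<delta> - 1) (-B - \<mu> + 2*\<delta> - 1) r" for r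
  define dI where "dI r = - of_real (ln r) * mi g s0 r" for r
  have Wi: "set_integrable lborel {0<..} W"
    unfolding W_def using pw_set_integrable(1)[of "A - \<mu> - 2*\<delta> - 1" "-B - \<mu> + 2*\<delta> - 1"] \<delta>
    by (intro set_integrable_mult_right) auto
  have reW: "-B < Re w" "Re w < A" "\<mu> - \<delta> \<le> Re w" "Re w \<le> \<mu> + \<delta>" if "w \<in> cball s0 \<delta>" for w
  proof -
    have "\<bar>Re w - Re s0\<bar> \<le> \<delta>" using that abs_Re_le_cmod[of "w - s0"] by (auto simp: dist_norm norm_minus_commute)
    then show "-B < Re w" "Re w < A" "\<mu> - \<delta> \<le> Re w" "Re w \<le> \<mu> + \<delta>" using \<delta> by (auto simp: \<mu>_def)
  qed
  have dbound: "norm (- of_real (ln r) * mi g w r) \<le> W r" if r: "r > 0" and w: "w \<in> cball s0 \<delta>" for r w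
  proof -
    have "norm (- of_real (ln r) * mi g w r) = \<bar>ln r\<bar> * norm (mi g w r)" by (simp add: norm_mult)
    also have "\<dots> \<le> (pw (-\<delta>) \<delta> r / \<delta>) * (C * pw (A - (\<mu> + \<delta>) - 1) (-B - (\<mu> - \<delta>) - 1) r)"
      using abs_ln_le[OF r \<delta>(1)] mi_bound[OF g r reW(3,4)[OF w]]
      by (intro mult_mono) auto
    also have "\<dots> = C / \<delta> * (pw (-\<delta>) \<delta> r * pw (A - (\<mu> + \<delta>) - 1) (-B - (\<mu> - \<delta>) - 1) r)" by simp
    also have "\<dots> = W r" unfolding W_def pw_mult[OF r] by (simp add: algebra_simps)
    finally show ?thesis .
  qed
  have dcont: "continuous_on {0<..} dI"
    unfolding dI_def by (intro continuous_intros mi_cont cg) auto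
  have lim: "((\<lambda>w. (Mel g w - Mel g s0) / (w - s0)) \<longlongrightarrow> (LINT r:{0<..}|lborel. dI r)) (at s0 within ball s0 \<delta>)"
  proof (subst tendsto_at_iff_sequentially, intro allI impI)
    fix X assume X: "\<forall>i. X i \<in> ball s0 \<delta> - {s0}" and Xl: "X \<longlonglongrightarrow> s0"
    have Xc: "X i \<in> cball s0 \<delta>" "X i \<noteq> s0" for i using X[rule_format, of i] by (auto simp: less_imp_le)
    define q where "q i r = inverse (X i - s0) * (mi g (X i) r - mi g s0 r)" for i r
    have qi: "(LINT r:{0<..}|lborel. q i r) = (Mel g (X i) - Mel g s0) / (X i - s0)" for i
    proof -
      have int1: "set_integrable lborel {0<..} (mi g (X i))" by (rule Mel_integrable[OF g reW(1,2)[OF Xc(1)]])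
      have int2: "set_integrable lborel {0<..} (mi g s0)" by (rule Mel_integrable[OF g s0])
      have e1: "(LINT r:{0<..}|lborel. q i r) = inverse (X i - s0) * (LINT r:{0<..}|lborel. (mi g (X i) r - mi g s0 r))"
        unfolding q_def by (rule set_integral_mult_right)
      have e2: "(LINT r:{0<..}|lborel. (mi g (X i) r - mi g s0 r)) = Mel g (X i) - Mel g s0"
        unfolding Mel_def by (rule set_integral_diff(2)[OF int1 int2])
      show ?thesis unfolding e1 e2 by (metis divide_inverse mult.commute)
    qed
    have "(\<lambda>i. integral\<^sup>L lborel (\<lambda>r. indicator {0<..} r *\<^sub>R q i r)) \<longlonglongrightarrow> integral\<^sup>L lborel (\<lambda>r. indicator {0<..} r *\<^sub>R dI r)"
    proof (rule integral_dominated_convergence[where w = "\<lambda>r. indicator {0<..} r *\<^sub>R W r"])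
      show "(\<lambda>r. indicator {0<..} r *\<^sub>R dI r) \<in> borel_measurable lborel"
        using borel_measurable_continuous_on_indicator[OF _ dcont] by simp
      show "(\<lambda>r. indicator {0<..} r *\<^sub>R q i r) \<in> borel_measurable lborel" for i
      proof -
        have qc: "continuous_on {0<..} (q i)" unfolding q_def by (intro continuous_intros mi_cont cg)
        show ?thesis using borel_measurable_continuous_on_indicator[OF _ qc] by simp
      qed
      show "integrable lborel (\<lambda>r. indicator {0<..} r *\<^sub>R W r)" using Wi by (simp add: set_integrable_def)
      show "AE r in lborel. (\<lambda>i. indicator {0<..} r *\<^sub>R q i r) \<longlonglongrightarrow> indicator {0<..} r *\<^sub>R dI r"
      proof (rule AE_I2)
        fix r :: real
        show "(\<lambda>i. indicator {0<..} r *\<^sub>R q i r) \<longlonglongrightarrow> indicator {0<..} r *\<^sub>R dI r"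
        proof (cases "r > 0")
          case True
          have "((\<lambda>w. (mi g w r - mi g s0 r) / (w - s0)) \<longlongrightarrow> dI r) (at s0)"
            using mi_deriv[OF True, of g s0 UNIV] unfolding has_field_derivative_iff dI_def by simp
          then have "((\<lambda>w. (mi g w r - mi g s0 r) / (w - s0)) \<circ> X) \<longlonglongrightarrow> dI r"
            using tendsto_at_iff_sequentially[of "\<lambda>w. (mi g w r - mi g s0 r) / (w - s0)" "dI r" s0 UNIV] X Xl by auto
          then show ?thesis using True by (simp add: q_def o_def divide_inverse_commute)
        qed simp
      qed
      show "AE r in lborel. norm (indicator {0<..} r *\<^sub>R q i r) \<le> indicator {0<..} r *\<^sub>R W r" for i
      proof (rule AE_I2)
        fix r :: real
        show "norm (indicator {0<..} r *\<^sub>R q i r) \<le> indicator {0<..} r *\<^sub>R W r"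
        proof (cases "r > 0")
          case True
          have "norm (mi g (X i) r - mi g s0 r) \<le> W r * norm (X i - s0)"
            by (rule field_differentiable_bound[of "cball s0 \<delta>" "\<lambda>w. mi g w r" "\<lambda>w. - of_real (ln r) * mi g w r"])
               (use Xc \<delta> mi_deriv[OF True] dbound[OF True] in auto)
          moreover have "norm (X i - s0) > 0" using Xc(2) by simp
          ultimately have "norm (mi g (X i) r - mi g s0 r) / norm (X i - s0) \<le> W r" by (simp add: pos_divide_le_eq)
          moreover have "norm (q i r) = norm (mi g (X i) r - mi g s0 r) / norm (X i - s0)"
            by (simp add: q_def norm_mult norm_inverse divide_inverse_commute)
          ultimately have "norm (q i r) \<le> W r" by simp
          then show ?thesis using True by simp
        qed simp
      qed
    qed
    then have "(\<lambda>i. LINT r:{0<..}|lborel. q i r) \<longlonglongrightarrow> (LINT r:{0<..}|lborel. dI r)"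
      unfolding set_lebesgue_integral_def .
    then show "((\<lambda>w. (Mel g w - Mel g s0) / (w - s0)) \<circ> X) \<longlonglongrightarrow> (LINT r:{0<..}|lborel. dI r)"
      unfolding o_def qi .
  qed
  have "at s0 within ball s0 \<delta> = at s0" by (rule at_within_open) (use \<delta> in auto)
  with lim have "(Mel g has_field_derivative (LINT r:{0<..}|lborel. dI r)) (at s0)"
    unfolding has_field_derivative_iff by simp
  then show "Mel g field_differentiable at s0 within {s. -B < Re s \<and> Re s < A}"
    by (auto simp: field_differentiable_def intro: has_field_derivative_at_within)
qed

definition qp :: "real \<Rightarrow> real poly" where "qp c = [:1, -c, 1:]"

lemma poly_qp: "poly (qp c) t = t^2 - c * t + 1"
  by (simp add: qp_def algebra_simps power2_eq_square)

definition cls :: "real \<Rightarrow> real \<Rightarrow> real \<Rightarrow> real poly \<Rightarrow> real \<Rightarrow> real" where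
  "cls c a b R t = t powr a * poly (qp c) t powr b * poly R t"

definition Dp :: "real \<Rightarrow> real \<Rightarrow> real \<Rightarrow> real poly \<Rightarrow> real poly" where
  "Dp c a b R = smult a (R * qp c) + smult b ([:0,1:] * pderiv (qp c) * R) + [:0,1:] * qp c * pderiv R"

lemma qp_pos:
  assumes "-2 \<le> c" "c < 2" "t > 0"
  shows "poly (qp c) t \<ge> (2 - c)/4 * (1 + t^2)"
proof -
  have "poly (qp c) t - (2 - c)/4 * (1 + t^2) = (2 + c)/4 * (t^2 + 1) - c * t"
    by (simp add: poly_qp field_simps)
  also have "\<dots> \<ge> 0"
  proof (cases "c \<ge> 0")
    case True
    have "(t - 1)^2 \<ge> 0" by simp
    then have "t^2 + 1 \<ge> 2 * t" by (simp add: power2_eq_square algebra_simps)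
    then have "(2 + c)/4 * (t^2 + 1) \<ge> (2 + c)/4 * (2 * t)" using assms by (intro mult_left_mono) auto
    moreover have "(2 + c)/4 * (2 * t) - c * t = (2 - c) * t / 2" by (simp add: algebra_simps)
    moreover have "(2 - c) * t / 2 \<ge> 0" using assms by simp
    ultimately show ?thesis by linarith
  next
    case False
    have "(2 + c)/4 * (t^2 + 1) \<ge> 0" using assms by (intro mult_nonneg_nonneg) auto
    moreover have "c * t \<le> 0" using False assms by (intro mult_nonpos_nonneg) auto
    ultimately show ?thesis by linarith
  qed
  finally show ?thesis by simp
qed

lemma qp_pos': "-2 \<le> c \<Longrightarrow> c < 2 \<Longrightarrow> t > 0 \<Longrightarrow> poly (qp c) t > 0"
proof -
  assume a: "-2 \<le> c" "c < 2" "t > 0"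
  have "(2 - c)/4 * (1 + t^2) > 0" using a by (intro mult_pos_pos) (auto simp: add_pos_nonneg)
  then show ?thesis using qp_pos[OF a] by linarith
qed

lemma cls_deriv:
  assumes c: "-2 \<le> c" "c < 2" and t: "t > 0"
  shows "(cls c a b R has_real_derivative cls c a (b - 1) (Dp c a b R) t / t) (at t)"
proof -
  define Q where "Q = poly (qp c) t"
  have Q: "Q > 0" using qp_pos'[OF c t] by (simp add: Q_def)
  have Qp: "poly (qp c) t > 0" using Q by (simp add: Q_def)
  show ?thesis unfolding cls_def
  proof (rule DERIV_cong[OF DERIV_mult[OF DERIV_mult[OF has_real_derivative_powr[OF t] DERIV_fun_powr[OF poly_DERIV Qp]] poly_DERIV]], goal_cases)
    case 1
    define P where "P = t powr a"
    define U where "U = poly (qp c) t powr b"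
    define Q' where "Q' = poly (pderiv (qp c)) t"
    have e1: "t powr (a - 1) = P / t" using t by (simp add: powr_diff P_def)
    have e2: "poly (qp c) t powr (b - real 1) = U / Q" using Q by (simp add: powr_diff U_def Q_def)
    have e3: "poly (qp c) t powr (b - 1) = U / Q" using e2 by simp
    have pD: "poly (Dp c a b R) t = a * (poly R t * Q) + b * (t * Q' * poly R t) + t * Q * poly (pderiv R) t"
      by (simp add: Dp_def Q_def Q'_def)
    have alg: "(a * (P / t) * U + b * (U / Q) * Q' * P) * x + y * (P * U) = P * (U / Q) * (a * (x * Q) + b * (t * Q' * x) + t * Q * y) / t" for x y
      using t Q by (simp add: field_simps)
    have e4: "Q powr (b - real 1) = U / Q" "Q powr (b - 1) = U / Q" "Q powr b = U"
      using e2 e3 by (simp_all add: Q_def U_def)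
    show ?case unfolding Q_def[symmetric] e1 unfolding e4 pD unfolding P_def[symmetric] Q'_def[symmetric]
      by (rule alg)
  qed
qed

fun Rs :: "real \<Rightarrow> real \<Rightarrow> real \<Rightarrow> real poly \<Rightarrow> nat \<Rightarrow> real poly" where
  "Rs c a b R 0 = R"
| "Rs c a b R (Suc k) = Dp c a (b - real k) (Rs c a b R k)"

definition gk :: "real \<Rightarrow> real \<Rightarrow> real \<Rightarrow> real poly \<Rightarrow> nat \<Rightarrow> real \<Rightarrow> real" where
  "gk c a b R k = cls c a (b - real k) (Rs c a b R k)"

lemma gk_deriv:
  assumes c: "-2 \<le> c" "c < 2" and t: "t > 0"
  shows "(gk c a b R k has_real_derivative gk c a b R (Suc k) t / t) (at t)"
proof -
  have e: "b - real k - 1 = b - real (Suc k)" by simp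
  show ?thesis unfolding gk_def using cls_deriv[OF c t, of a "b - real k" "Rs c a b R k"] unfolding e by simp
qed

lemma degree_qp: "degree (qp c) = 2" by (simp add: qp_def)

lemma degree_Dp: "degree (Dp c a b R) \<le> degree R + 2"
proof -
  have 1: "degree (smult a (R * qp c)) \<le> degree R + 2"
    using degree_mult_le[of R "qp c"] degree_smult_le[of a "R * qp c"] by (simp add: degree_qp)
  have "degree ([:0,1:] * pderiv (qp c) * R) \<le> degree ([:0,1:] * pderiv (qp c)) + degree R"
    by (rule degree_mult_le)
  also have "degree ([:0,1:] * pderiv (qp c)) \<le> degree [:0::real,1:] + degree (pderiv (qp c))"
    by (rule degree_mult_le)
  finally have 2: "degree (smult b ([:0,1:] * pderiv (qp c) * R)) \<le> degree R + 2"
    using degree_smult_le[of b "[:0,1:] * pderiv (qp c) * R"] by (simp add: degree_pderiv degree_qp)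
  have 3: "degree ([:0,1:] * qp c * pderiv R) \<le> degree R + 2"
  proof (cases "pderiv R = 0")
    case True then show ?thesis by simp
  next
    case False
    then have "degree R \<ge> 1" using pderiv_eq_0_iff[of R] by (cases "degree R") auto
    have "degree ([:0,1:] * qp c * pderiv R) \<le> degree ([:0,1:] * qp c) + degree (pderiv R)"
      by (rule degree_mult_le)
    also have "degree ([:0,1:] * qp c) \<le> degree [:0::real,1:] + degree (qp c)"
      by (rule degree_mult_le)
    finally show ?thesis using \<open>degree R \<ge> 1\<close> by (simp add: degree_pderiv degree_qp)
  qed
  show ?thesis unfolding Dp_def
    by (intro degree_add_le 1 2 3)
qed

lemma degree_Rs: "degree (Rs c a b R k) \<le> degree R + 2 * k"
proof (induction k)
  case (Suc k)
  then show ?case using degree_Dp[of c a "b - real k" "Rs c a b R k"] by simp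
qed simp

definition Sp :: "real poly \<Rightarrow> real" where "Sp P = (\<Sum>i\<le>degree P. \<bar>coeff P i\<bar>)"

lemma Sp_nonneg: "Sp P \<ge> 0" unfolding Sp_def by (intro sum_nonneg) auto

lemma poly_bound1:
  assumes "0 \<le> t" "t \<le> 1"
  shows "\<bar>poly P t\<bar> \<le> Sp P"
proof -
  have "\<bar>poly P t\<bar> = \<bar>\<Sum>i\<le>degree P. coeff P i * t ^ i\<bar>" by (simp add: poly_altdef)
  also have "\<dots> \<le> (\<Sum>i\<le>degree P. \<bar>coeff P i * t ^ i\<bar>)" by (rule sum_abs)
  also have "\<dots> \<le> (\<Sum>i\<le>degree P. \<bar>coeff P i\<bar>)"
  proof (intro sum_mono)
    fix i
    have "\<bar>t ^ i\<bar> \<le> 1" using assms by (simp add: power_le_one)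
    then show "\<bar>coeff P i * t ^ i\<bar> \<le> \<bar>coeff P i\<bar>"
      by (simp add: abs_mult mult_left_le)
  qed
  finally show ?thesis by (simp add: Sp_def)
qed

lemma poly_bound2:
  assumes "1 \<le> t" "degree P \<le> n"
  shows "\<bar>poly P t\<bar> \<le> Sp P * t ^ n"
proof -
  have "\<bar>poly P t\<bar> = \<bar>\<Sum>i\<le>degree P. coeff P i * t ^ i\<bar>" by (simp add: poly_altdef)
  also have "\<dots> \<le> (\<Sum>i\<le>degree P. \<bar>coeff P i * t ^ i\<bar>)" by (rule sum_abs)
  also have "\<dots> \<le> (\<Sum>i\<le>degree P. \<bar>coeff P i\<bar> * t ^ n)"
  proof (intro sum_mono)
    fix i assume "i \<in> {..degree P}"
    then have "t ^ i \<le> t ^ n" using assms by (intro power_increasing) auto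
    then show "\<bar>coeff P i * t ^ i\<bar> \<le> \<bar>coeff P i\<bar> * t ^ n"
      using assms by (simp add: abs_mult mult_left_mono)
  qed
  finally show ?thesis by (simp add: Sp_def sum_distrib_right)
qed

lemma cls_cont:
  assumes c: "-2 \<le> c" "c < 2"
  shows "continuous_on {0<..} (cls c a b R)"
proof -
  have "continuous_on {0<..} (\<lambda>t. t powr a * poly (qp c) t powr b * poly R t)"
    by (intro continuous_intros) (auto dest: qp_pos'[OF c])
  then show ?thesis by (simp add: cls_def[abs_def])
qed

lemma cls_good:
  assumes c: "-2 \<le> c" "c < 2" and b: "b \<le> 0" and d: "degree R \<le> d"
  shows "good (cls c a b R) a (-(a + 2*b + real d)) (((2 - c)/4) powr b * Sp R)"
  unfolding good_def
proof (intro conjI allI impI)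
  define \<kappa> where "\<kappa> = (2 - c)/4"
  have \<kappa>: "\<kappa> > 0" using c by (simp add: \<kappa>_def)
  show "0 \<le> ((2 - c)/4) powr b * Sp R" using Sp_nonneg by simp
  show "continuous_on {0<..} (cls c a b R)" by (rule cls_cont[OF c])
  fix r :: real
  {
    assume r: "0 < r \<and> r \<le> 1"
    have Q: "poly (qp c) r \<ge> \<kappa>"
    proof -
      have "\<kappa> \<le> \<kappa> * (1 + r^2)" using \<kappa> by simp
      then show ?thesis using qp_pos[OF c, of r] r by (simp add: \<kappa>_def)
    qed
    have "poly (qp c) r powr b \<le> \<kappa> powr b" using Q \<kappa> b by (intro powr_mono2') auto
    moreover have "\<bar>poly R r\<bar> \<le> Sp R" using r by (intro poly_bound1) auto
    ultimately have "r powr a * poly (qp c) r powr b * \<bar>poly R r\<bar> \<le> r powr a * \<kappa> powr b * Sp R"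
      by (intro mult_mono) auto
    then show "\<bar>cls c a b R r\<bar> \<le> ((2 - c)/4) powr b * Sp R * r powr a"
      by (simp add: cls_def abs_mult \<kappa>_def mult_ac)
  }
  {
    assume r: "1 \<le> r"
    have Q: "poly (qp c) r \<ge> \<kappa> * r^2"
    proof -
      have "\<kappa> * r^2 \<le> \<kappa> * (1 + r^2)" using \<kappa> by simp
      then show ?thesis using qp_pos[OF c, of r] r by (simp add: \<kappa>_def)
    qed
    have "poly (qp c) r powr b \<le> (\<kappa> * r^2) powr b" using Q \<kappa> b r by (intro powr_mono2') auto
    also have "(\<kappa> * r^2) powr b = \<kappa> powr b * (r^2) powr b"
      using \<kappa> r by (intro powr_mult)
    also have "(r^2) powr b = r powr (2 * b)"
    proof -
      have r2: "r^2 = r powr 2" using powr_realpow[of r 2] r by simp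
      show ?thesis unfolding r2 by (simp add: powr_powr)
    qed
    finally have 1: "poly (qp c) r powr b \<le> \<kappa> powr b * r powr (2 * b)" .
    have 2: "\<bar>poly R r\<bar> \<le> Sp R * r ^ d" using r d by (intro poly_bound2) auto
    have "r powr a * poly (qp c) r powr b * \<bar>poly R r\<bar> \<le> r powr a * (\<kappa> powr b * r powr (2 * b)) * (Sp R * r ^ d)"
      using 1 2 by (intro mult_mono) (auto simp: Sp_nonneg)
    also have "\<dots> = \<kappa> powr b * Sp R * (r powr a * r powr (2 * b) * r powr (real d))"
      using r powr_realpow[of r d] by (simp only: mult_ac)
    also have "r powr a * r powr (2 * b) * r powr (real d) = r powr (- (- (a + 2 * b + real d)))"
      using r by (simp only: powr_add[symmetric] minus_minus)
    finally show "\<bar>cls c a b R r\<bar> \<le> ((2 - c)/4) powr b * Sp R * r powr (- (- (a + 2 * b + real d)))"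
      by (simp add: cls_def abs_mult \<kappa>_def)
  }
qed

lemma gk_good:
  assumes c: "-2 \<le> c" "c < 2" and b: "b \<le> 0" and d: "degree R \<le> d"
  shows "good (gk c a b R k) a (-(a + 2*b + real d)) (((2 - c)/4) powr (b - real k) * Sp (Rs c a b R k))"
proof -
  have dg: "degree (Rs c a b R k) \<le> d + 2 * k" using degree_Rs[of c a b R k] d by simp
  have g1: "good (cls c a (b - real k) (Rs c a b R k)) a (-(a + 2 * (b - real k) + real (d + 2 * k)))
          (((2 - c)/4) powr (b - real k) * Sp (Rs c a b R k))"
    by (rule cls_good[OF c _ dg]) (use b in simp)
  have eq: "-(a + 2 * (b - real k) + real (d + 2 * k)) = -(a + 2*b + real d)" by simp
  show ?thesis unfolding gk_def using g1 unfolding eq .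
qed

lemma gk0: "gk c a b R 0 = cls c a b R" by (simp add: gk_def fun_eq_iff)

lemma gk_Mel:
  assumes c: "-2 \<le> c" "c < 2" and b: "b \<le> 0" and d: "degree R \<le> d"
    and s: "-(-(a + 2*b + real d)) < Re s" "Re s < a"
  shows "Mel (gk c a b R k) s = s ^ k * Mel (cls c a b R) s"
proof (induction k)
  case 0 then show ?case by (simp add: gk0)
next
  case (Suc k)
  have "Mel (gk c a b R (Suc k)) s = s * Mel (gk c a b R k) s"
    by (rule Mel_parts[OF gk_good[OF c b d] gk_good[OF c b d] gk_deriv[OF c] s])
  then show ?case using Suc by simp
qed

lemma cls_decay:
  assumes c: "-2 \<le> c" "c < 2" and b: "b \<le> 0" and d: "degree R \<le> d"
    and s: "a + 2*b + real d < \<mu>" "\<mu> < a"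
  shows "\<exists>C. \<forall>\<xi>. norm (Complex \<mu> \<xi>) ^ N * norm (Mel (cls c a b R) (Complex \<mu> \<xi>)) \<le> C"
proof -
  let ?B = "-(a + 2*b + real d)"
  define C where "C = ((2 - c)/4) powr (b - real N) * Sp (Rs c a b R N)"
  show ?thesis
  proof (intro exI allI)
    fix \<xi>
    define z where "z = Complex \<mu> \<xi>"
    have z: "-?B < Re z" "Re z < a" using s by (auto simp: z_def)
    have "norm z ^ N * norm (Mel (cls c a b R) z) = norm (Mel (gk c a b R N) z)"
      using gk_Mel[OF c b d, where s=z and k=N] z by (simp add: norm_mult norm_power)
    also have "\<dots> \<le> C * (1/(a - Re z) - 1/(-?B - Re z))"
      unfolding C_def by (rule Mel_norm[OF gk_good[OF c b d] z])
    finally show "norm (Complex \<mu> \<xi>) ^ N * norm (Mel (cls c a b R) (Complex \<mu> \<xi>)) \<le> C * (1/(a - \<mu>) - 1/(-?B - \<mu>))"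
      by (simp add: z_def)
  qed
qed

lemma cls_holo:
  assumes c: "-2 \<le> c" "c < 2" and b: "b \<le> 0" and d: "degree R \<le> d"
  shows "Mel (cls c a b R) holomorphic_on {s. a + 2*b + real d < Re s \<and> Re s < a}"
  by (rule holomorphic_on_subset[OF Mel_holo[OF cls_good[OF c b d, of a]]]) auto

lemma cls_integrable:
  assumes c: "-2 \<le> c" "c < 2" and b: "b \<le> 0" and d: "degree R \<le> d"
    and s: "a + 2*b + real d < Re s" "Re s < a"
  shows "set_integrable lborel {0<..} (mi (cls c a b R) s)"
  by (rule Mel_integrable[OF cls_good[OF c b d, of a]]) (use s in auto)

lemma Mel_lin:
  assumes "\<And>r. r > 0 \<Longrightarrow> mi g s r = u * mi g1 s1 r + v * mi g2 s2 r"
    and "set_integrable lborel {0<..} (mi g1 s1)" "set_integrable lborel {0<..} (mi g2 s2)"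
  shows "Mel g s = u * Mel g1 s1 + v * Mel g2 s2"
proof -
  have "Mel g s = (LINT r:{0<..}|lborel. u * mi g1 s1 r + v * mi g2 s2 r)"
    unfolding Mel_def by (rule set_lebesgue_integral_cong) (use assms(1) in auto)
  also have "\<dots> = (LINT r:{0<..}|lborel. u * mi g1 s1 r) + (LINT r:{0<..}|lborel. v * mi g2 s2 r)"
    using assms(2,3) by (intro set_integral_add(2) set_integrable_mult_right) auto
  also have "\<dots> = u * Mel g1 s1 + v * Mel g2 s2" by (simp add: Mel_def)
  finally show ?thesis .
qed

lemma Mel_cong: "(\<And>r. r > 0 \<Longrightarrow> g r = h r) \<Longrightarrow> Mel g s = Mel h s"
  unfolding Mel_def mi_def by (rule set_lebesgue_integral_cong) auto

definition cc :: "real \<Rightarrow> real" where "cc \<alpha> = 2 * cos (2 * \<alpha>)"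

lemma cc_bounds:
  assumes "0 < \<alpha>" "\<alpha> < pi"
  shows "-2 \<le> cc \<alpha>" "cc \<alpha> < 2"
proof -
  show "-2 \<le> cc \<alpha>" unfolding cc_def using cos_ge_minus_one[of "2*\<alpha>"] by simp
  have "sin \<alpha> > 0" using assms by (intro sin_gt_zero)
  then have "(sin \<alpha>)^2 > 0" by simp
  then show "cc \<alpha> < 2" unfolding cc_def cos_double_sin by simp
qed

lemma Kfrak_cls:
  assumes "0 < \<alpha>" "\<alpha> < pi" "t > 0"
  shows "Kfrak \<alpha> t = cls (cc \<alpha>) (1/4) (-1/4) 1 t"
proof -
  define c where "c = cc \<alpha>"
  have s2: "4 * (sin \<alpha>)^2 = 2 - c" unfolding c_def cc_def cos_double_sin by simp
  have sq: "(sqrt t)^2 = t" using assms by simp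
  have "(sqrt t - 1 / sqrt t)^2 = t - 2 + 1 / t"
    using assms by (simp add: power2_diff power_divide)
  then have "4 * (sin \<alpha>)^2 + (sqrt t - 1 / sqrt t)^2 = 2 - c + (t - 2 + 1 / t)"
    unfolding s2 by simp
  also have "\<dots> = poly (qp c) t / t"
    using assms by (simp add: poly_qp field_simps power2_eq_square)
  finally have "4 * (sin \<alpha>)^2 + (sqrt t - 1 / sqrt t)^2 = poly (qp c) t / t" .
  moreover have "(poly (qp c) t / t) powr (-1/4) = t powr (1/4) * poly (qp c) t powr (-1/4)"
  proof -
    have Q: "poly (qp c) t > 0" using qp_pos'[OF cc_bounds[OF assms(1,2)] assms(3)] by (simp add: c_def)
    have "(poly (qp c) t / t) powr (-1/4) = poly (qp c) t powr (-1/4) / t powr (-1/4)"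
      using Q assms by (simp add: powr_divide)
    also have "t powr (-1/4) = 1 / t powr (1/4)" using assms by (simp add: powr_minus_divide)
    finally show ?thesis by simp
  qed
  ultimately show ?thesis unfolding Kfrak_def cls_def c_def by simp
qed

definition K0 :: "real \<Rightarrow> real \<Rightarrow> real" where "K0 c = cls c (1/4) (-1/4) 1"
definition Tf :: "real \<Rightarrow> real \<Rightarrow> real" where "Tf c = gk c (1/4) (-1/4) 1 1"
definition H1 :: "real \<Rightarrow> real \<Rightarrow> real" where "H1 c = cls c (1/4) (-5/4) [:1/2, -c/4:]"
definition H2 :: "real \<Rightarrow> real \<Rightarrow> real" where "H2 c = cls c (5/4) (-5/4) [:c/4, -1/2:]"

lemma vals:
  assumes c: "-2 \<le> c" "c < 2" and t: "t > 0"
  shows "K0 c t = t powr (1/4) * (poly (qp c) t * poly (qp c) t powr (-5/4))"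
    "Tf c t = t powr (1/4) * poly (qp c) t powr (-5/4) * ((1 - t^2)/4)"
    "H1 c t = t powr (1/4) * poly (qp c) t powr (-5/4) * (1/2 - c * t / 4)"
    "H2 c t = t * t powr (1/4) * poly (qp c) t powr (-5/4) * (c/4 - t/2)"
proof -
  have Q: "poly (qp c) t > 0" by (rule qp_pos'[OF c t])
  have "poly (qp c) t powr (-1/4) = poly (qp c) t powr (1 + -5/4)" by simp
  also have "\<dots> = poly (qp c) t * poly (qp c) t powr (-5/4)" using Q by (simp only: powr_add powr_one)
  finally show "K0 c t = t powr (1/4) * (poly (qp c) t * poly (qp c) t powr (-5/4))"
    by (simp add: K0_def cls_def)
  have pD: "poly (Dp c (1/4) (- (1/4)) 1) t = (1 - t^2)/4"
    by (simp add: Dp_def qp_def pderiv_pCons field_simps power2_eq_square)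
  show "Tf c t = t powr (1/4) * poly (qp c) t powr (-5/4) * ((1 - t^2)/4)"
    unfolding Tf_def gk_def by (simp add: cls_def pD)
  show "H1 c t = t powr (1/4) * poly (qp c) t powr (-5/4) * (1/2 - c * t / 4)"
    by (simp add: H1_def cls_def algebra_simps)
  have "t powr (5/4) = t powr (1 + 1/4)" by simp
  also have "\<dots> = t * t powr (1/4)" using t by (simp only: powr_add powr_one)
  finally show "H2 c t = t * t powr (1/4) * poly (qp c) t powr (-5/4) * (c/4 - t/2)"
    by (simp add: H2_def cls_def algebra_simps)
qed

lemma ids:
  assumes c: "-2 \<le> c" "c < 2" and t: "t > 0"
  shows "H1 c t = Tf c t + K0 c t / 4" "H2 c t = Tf c t - K0 c t / 4"
    "H2 c t / t + t * H1 c t = c * Tf c t"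
proof -
  define P where "P = t powr (1/4)"
  define U where "U = poly (qp c) t powr (-5/4)"
  note v = vals[OF c t, folded P_def U_def]
  show "H1 c t = Tf c t + K0 c t / 4" unfolding v by (simp add: poly_qp field_simps power2_eq_square)
  show "H2 c t = Tf c t - K0 c t / 4" unfolding v by (simp add: poly_qp field_simps power2_eq_square)
  show "H2 c t / t + t * H1 c t = c * Tf c t" unfolding v using t by (simp add: field_simps power2_eq_square)
qed

lemma deg1: "degree [:x, y:] \<le> 1" by (simp add: degree_pCons_eq_if)
lemma deg0: "degree (1::real poly) \<le> 0" by simp

lemma rels:
  assumes c: "-2 \<le> c" "c < 2" and s: "-1/4 < Re s" "Re s < 1/4"
  shows "Mel (H1 c) s = (s + 1/4) * Mel (K0 c) s"
    "Mel (H2 c) s = (s - 1/4) * Mel (K0 c) s"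
    "Mel (H2 c) (s + 1) + Mel (H1 c) (s - 1) = of_real c * s * Mel (K0 c) s"
proof -
  have b1: "-1/4 \<le> (0::real)" "-5/4 \<le> (0::real)" by auto
  have iK: "set_integrable lborel {0<..} (mi (K0 c) s)"
    unfolding K0_def by (rule cls_integrable[OF c b1(1) deg0]) (use s in auto)
  have iT: "set_integrable lborel {0<..} (mi (Tf c) s)"
    unfolding Tf_def by (rule Mel_integrable[OF gk_good[OF c b1(1) deg0]]) (use s in auto)
  have MT: "Mel (Tf c) s = s * Mel (K0 c) s"
    unfolding Tf_def K0_def using gk_Mel[OF c b1(1) deg0, where s=s and k=1] s by simp
  have iH1: "set_integrable lborel {0<..} (mi (H1 c) (s - 1))"
    unfolding H1_def by (rule cls_integrable[OF c b1(2) deg1]) (use s in auto)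
  have iH2: "set_integrable lborel {0<..} (mi (H2 c) (s + 1))"
    unfolding H2_def by (rule cls_integrable[OF c b1(2) deg1]) (use s in auto)
  have "Mel (H1 c) s = 1 * Mel (Tf c) s + (1/4) * Mel (K0 c) s"
  proof (rule Mel_lin[OF _ iT iK])
    fix r :: real assume r: "r > 0"
    show "mi (H1 c) s r = 1 * mi (Tf c) s r + 1 / 4 * mi (K0 c) s r"
      using r unfolding mi_def ids(1)[OF c r] by (simp add: field_simps)
  qed
  then show "Mel (H1 c) s = (s + 1/4) * Mel (K0 c) s" unfolding MT by (simp add: algebra_simps)
  have "Mel (H2 c) s = 1 * Mel (Tf c) s + (-1/4) * Mel (K0 c) s"
  proof (rule Mel_lin[OF _ iT iK])
    fix r :: real assume r: "r > 0"
    show "mi (H2 c) s r = 1 * mi (Tf c) s r + (-1 / 4) * mi (K0 c) s r"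
      using r unfolding mi_def ids(2)[OF c r] by (simp add: field_simps)
  qed
  then show "Mel (H2 c) s = (s - 1/4) * Mel (K0 c) s" unfolding MT by (simp add: algebra_simps)
  have "Mel (\<lambda>r. c * Tf c r) s = 1 * Mel (H2 c) (s + 1) + 1 * Mel (H1 c) (s - 1)"
  proof (rule Mel_lin[OF _ iH2 iH1])
    fix r :: real assume r: "r > 0"
    have e0: "-(s+1) = -s - 1" by simp
    have e1: "complex_of_real r powr (-(s+1)) = complex_of_real r powr (-s) / complex_of_real r"
      unfolding e0 by (rule cpow_m1[OF r])
    have e00: "-(s-1) - 1 = -s" by simp
    have "complex_of_real r powr (-s) = complex_of_real r powr (-(s-1)) / complex_of_real r"
      using cpow_m1[OF r, of "-(s-1)"] unfolding e00 .
    then have e2: "complex_of_real r powr (-(s-1)) = complex_of_real r powr (-s) * complex_of_real r"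
      using r by (simp add: field_simps)
    have e3: "c * Tf c r = H2 c r / r + r * H1 c r" using ids(3)[OF c r] by simp
    show "mi (\<lambda>r. c * Tf c r) s r = 1 * mi (H2 c) (s + 1) r + 1 * mi (H1 c) (s - 1) r"
      using r unfolding mi_def e1 e2 e3 by (simp add: field_simps)
  qed
  moreover have "Mel (\<lambda>r. c * Tf c r) s = of_real c * Mel (Tf c) s + 0 * Mel (Tf c) s"
    by (rule Mel_lin[OF _ iT iT]) (simp add: mi_def)
  ultimately show "Mel (H2 c) (s + 1) + Mel (H1 c) (s - 1) = of_real c * s * Mel (K0 c) s"
    unfolding MT by (simp add: mult.assoc)
qed

lemma H1_holo: "-2 \<le> c \<Longrightarrow> c < 2 \<Longrightarrow> Mel (H1 c) holomorphic_on {s. -5/4 < Re s \<and> Re s < 1/4}"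
  unfolding H1_def by (rule holomorphic_on_subset[OF cls_holo[OF _ _ _ deg1]]) auto
lemma H2_holo: "-2 \<le> c \<Longrightarrow> c < 2 \<Longrightarrow> Mel (H2 c) holomorphic_on {s. -1/4 < Re s \<and> Re s < 5/4}"
  unfolding H2_def by (rule holomorphic_on_subset[OF cls_holo[OF _ _ _ deg1]]) auto

lemma H1_decay: "-2 \<le> c \<Longrightarrow> c < 2 \<Longrightarrow> -5/4 < \<mu> \<Longrightarrow> \<mu> < 1/4 \<Longrightarrow>
   \<exists>C. \<forall>\<xi>. norm (Complex \<mu> \<xi>) ^ N * norm (Mel (H1 c) (Complex \<mu> \<xi>)) \<le> C"
  unfolding H1_def by (rule cls_decay[OF _ _ _ deg1]) auto
lemma H2_decay: "-2 \<le> c \<Longrightarrow> c < 2 \<Longrightarrow> -1/4 < \<mu> \<Longrightarrow> \<mu> < 5/4 \<Longrightarrow>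
   \<exists>C. \<forall>\<xi>. norm (Complex \<mu> \<xi>) ^ N * norm (Mel (H2 c) (Complex \<mu> \<xi>)) \<le> C"
  unfolding H2_def by (rule cls_decay[OF _ _ _ deg1]) auto

definition HS :: "real \<Rightarrow> real \<Rightarrow> real \<Rightarrow> complex set" where
  "HS a b \<sigma> = {s. inner 1 s > a} \<inter> {s. inner 1 s < b} \<inter> {s. inner (Complex 0 \<sigma>) s > 0}"

lemma mem_HS: "s \<in> HS a b \<sigma> \<longleftrightarrow> a < Re s \<and> Re s < b \<and> 0 < \<sigma> * Im s"
  by (simp add: HS_def inner_complex_def)

lemma HS_open: "open (HS a b \<sigma>)"
  unfolding HS_def by (intro open_Int open_halfspace_gt open_halfspace_lt)

lemma HS_conn: "connected (HS a b \<sigma>)"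
  unfolding HS_def by (intro convex_connected convex_Int convex_halfspace_gt convex_halfspace_lt)

lemma HS_Im: "s \<in> HS a b \<sigma> \<Longrightarrow> Im s \<noteq> 0"
  by (auto simp: mem_HS)

lemma Sfrak_Im: "z \<in> Sfrak \<Longrightarrow> Im z = 0"
  by (auto simp: Sfrak_def)

lemma HS_Sfrak: "HS a b \<sigma> \<subseteq> - Sfrak"
  using HS_Im Sfrak_Im by blast

lemma HS_ident:
  assumes "\<sigma> = 1 \<or> \<sigma> = -1" "a \<le> -1/4" "1/4 \<le> b"
    and "f holomorphic_on HS a b \<sigma>" "g holomorphic_on HS a b \<sigma>"
    and "\<And>s. s \<in> HS (-1/4) (1/4) \<sigma> \<Longrightarrow> f s = g s"
    and "s \<in> HS a b \<sigma>"
  shows "f s = g s"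
proof (rule analytic_continuation_open[where s="HS (-1/4) (1/4) \<sigma>" and s'="HS a b \<sigma>" and f=f and g=g and z=s])
  have "Complex 0 \<sigma> \<in> HS (-1/4) (1/4) \<sigma>" using assms(1) by (auto simp: mem_HS)
  then show "HS (-1/4) (1/4) \<sigma> \<noteq> {}" by blast
  show "HS (-1/4) (1/4) \<sigma> \<subseteq> HS a b \<sigma>" using assms(2,3) by (auto simp: mem_HS)
qed (use assms HS_open HS_conn in auto)

lemma shift_holo:
  assumes "Khat holomorphic_on (- Sfrak)" "Im w = 0"
  shows "(\<lambda>s. Khat (s + w)) holomorphic_on HS a b \<sigma>"
proof -
  have "(Khat \<circ> (\<lambda>s. s + w)) holomorphic_on HS a b \<sigma>"
  proof (rule holomorphic_on_compose)
    show "(\<lambda>s. s + w) holomorphic_on HS a b \<sigma>" by (intro holomorphic_intros)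
    have "(\<lambda>s. s + w) ` HS a b \<sigma> \<subseteq> - Sfrak"
    proof
      fix z assume "z \<in> (\<lambda>s. s + w) ` HS a b \<sigma>"
      then obtain s where s: "s \<in> HS a b \<sigma>" "z = s + w" by auto
      then have "Im z \<noteq> 0" using HS_Im[OF s(1)] assms(2) by simp
      then show "z \<in> - Sfrak" using Sfrak_Im by blast
    qed
    then show "Khat holomorphic_on (\<lambda>s. s + w) ` HS a b \<sigma>"
      using assms(1) holomorphic_on_subset by blast
  qed
  then show ?thesis by (simp add: o_def)
qed

definition dec :: "(complex \<Rightarrow> complex) \<Rightarrow> real \<Rightarrow> bool" where
  "dec Khat \<mu> \<longleftrightarrow> (\<forall>N::nat. \<exists>C. \<forall>\<xi>. 1 \<le> \<bar>\<xi>\<bar> \<longrightarrow> norm (Khat (Complex \<mu> \<xi>)) * \<bar>\<xi>\<bar> ^ N \<le> C)"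

lemma sigma_of:
  fixes \<xi> :: real
  assumes "1 \<le> \<bar>\<xi>\<bar>"
  obtains \<sigma> where "\<sigma> = 1 \<or> \<sigma> = -1" "0 < \<sigma> * \<xi>"
proof (cases "\<xi> > 0")
  case True then show ?thesis by (intro that[of 1]) auto
next
  case False then show ?thesis using assms by (intro that[of "-1"]) auto
qed

lemma base_dec:
  assumes G: "\<And>s. a < Re s \<Longrightarrow> Re s < b \<Longrightarrow> Im s \<noteq> 0 \<Longrightarrow> (s + w) * Khat s = G s"
    and w: "Im w = 0"
    and D: "\<And>N. \<exists>C. \<forall>\<xi>. norm (Complex \<mu> \<xi>) ^ N * norm (G (Complex \<mu> \<xi>)) \<le> C"
    and \<mu>: "a < \<mu>" "\<mu> < b"
  shows "dec Khat \<mu>"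
  unfolding dec_def
proof
  fix N
  obtain C where C: "\<And>\<xi>. norm (Complex \<mu> \<xi>) ^ N * norm (G (Complex \<mu> \<xi>)) \<le> C" using D by blast
  show "\<exists>C. \<forall>\<xi>. 1 \<le> \<bar>\<xi>\<bar> \<longrightarrow> norm (Khat (Complex \<mu> \<xi>)) * \<bar>\<xi>\<bar> ^ N \<le> C"
  proof (intro exI allI impI)
    fix \<xi> :: real assume \<xi>: "1 \<le> \<bar>\<xi>\<bar>"
    define s where "s = Complex \<mu> \<xi>"
    have eq: "(s + w) * Khat s = G s" using G[of s] \<mu> \<xi> by (auto simp: s_def)
    have n1: "norm (s + w) \<ge> \<bar>\<xi>\<bar>" using abs_Im_le_cmod[of "s + w"] w by (simp add: s_def)
    have n2: "\<bar>\<xi>\<bar> \<le> norm s" using abs_Im_le_cmod[of s] by (simp add: s_def)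
    have "norm (Khat s) \<le> norm (s + w) * norm (Khat s)"
      using n1 \<xi> by (intro mult_le_cancel_right1[THEN iffD2]) auto
    also have "\<dots> = norm (G s)" using eq by (metis norm_mult)
    finally have k: "norm (Khat s) \<le> norm (G s)" .
    have "norm (Khat s) * \<bar>\<xi>\<bar> ^ N \<le> norm (G s) * norm s ^ N"
      using k n2 \<xi> by (intro mult_mono power_mono) auto
    also have "\<dots> \<le> C" using C[of \<xi>] by (simp add: s_def mult.commute)
    finally show "norm (Khat (Complex \<mu> \<xi>)) * \<bar>\<xi>\<bar> ^ N \<le> C" by (simp add: s_def)
  qed
qed

lemma rec_bound:
  fixes X Y Z p q s :: complex and c M \<xi> :: real
  assumes "p * X + q * Y = of_real c * s * Z" "\<bar>\<xi>\<bar> \<le> norm p" "norm q \<le> M * \<bar>\<xi>\<bar>" "norm s \<le> M * \<bar>\<xi>\<bar>" "1 \<le> \<bar>\<xi>\<bar>"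
  shows "norm X \<le> M * (\<bar>c\<bar> * norm Z + norm Y)"
proof -
  have "0 \<le> M * \<bar>\<xi>\<bar>" using assms(4) norm_ge_zero order_trans by blast
  then have M: "M \<ge> 0" using assms(5) by (auto simp: zero_le_mult_iff)
  have "p * X = of_real c * s * Z - q * Y" using assms(1) by (simp add: algebra_simps)
  then have "norm p * norm X = norm (of_real c * s * Z - q * Y)" by (metis norm_mult)
  also have "\<dots> \<le> norm (of_real c * s * Z) + norm (q * Y)" by (rule norm_triangle_ineq4)
  also have "\<dots> = \<bar>c\<bar> * norm s * norm Z + norm q * norm Y" by (simp add: norm_mult)
  also have "\<dots> \<le> \<bar>c\<bar> * (M * \<bar>\<xi>\<bar>) * norm Z + (M * \<bar>\<xi>\<bar>) * norm Y"
    using assms(3,4) by (intro add_mono mult_right_mono mult_left_mono) auto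
  finally have 1: "norm p * norm X \<le> \<bar>\<xi>\<bar> * (M * (\<bar>c\<bar> * norm Z + norm Y))" by (simp add: algebra_simps)
  have "\<bar>\<xi>\<bar> * norm X \<le> norm p * norm X" using assms(2) by (intro mult_right_mono) auto
  with 1 have "\<bar>\<xi>\<bar> * norm X \<le> \<bar>\<xi>\<bar> * (M * (\<bar>c\<bar> * norm Z + norm Y))" by linarith
  then show ?thesis using assms(5) by (simp add: mult_le_cancel_left)
qed

lemma scale_bound:
  fixes x M c a b e C1 C2 :: real
  assumes "x \<le> M * (c * a + b)" "0 \<le> e" "a * e \<le> C1" "b * e \<le> C2" "0 \<le> M" "0 \<le> c"
  shows "x * e \<le> M * (c * C1 + C2)"
proof -
  have "x * e \<le> (M * (c * a + b)) * e" by (rule mult_right_mono[OF assms(1,2)])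
  also have "\<dots> = M * (c * (a * e) + b * e)" by (simp add: algebra_simps)
  also have "\<dots> \<le> M * (c * C1 + C2)"
    using assms by (intro mult_left_mono add_mono) auto
  finally show ?thesis .
qed

lemma dec_step:
  assumes R: "\<And>s. Im s \<noteq> 0 \<Longrightarrow> (s + 3/4) * Khat (s + 1) + (s - 3/4) * Khat (s - 1) = of_real c * s * Khat s"
    and d0: "dec Khat \<mu>"
  shows "dec Khat (\<mu> - 1) \<Longrightarrow> dec Khat (\<mu> + 1)" and "dec Khat (\<mu> + 1) \<Longrightarrow> dec Khat (\<mu> - 1)"
proof -
  define M where "M = \<bar>\<mu>\<bar> + 2"
  have nb: "norm (s + 3/4) \<le> M * \<bar>\<xi>\<bar>" "norm (s - 3/4) \<le> M * \<bar>\<xi>\<bar>" "norm s \<le> M * \<bar>\<xi>\<bar>"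
     "\<bar>\<xi>\<bar> \<le> norm (s + 3/4)" "\<bar>\<xi>\<bar> \<le> norm (s - 3/4)"
    if s: "s = Complex \<mu> \<xi>" and \<xi>: "1 \<le> \<bar>\<xi>\<bar>" for s \<xi>
  proof -
    have "norm (Complex x \<xi>) \<le> \<bar>x\<bar> + \<bar>\<xi>\<bar>" for x using cmod_le[of "Complex x \<xi>"] by simp
    moreover have "\<bar>\<mu> + 3/4\<bar> + \<bar>\<xi>\<bar> \<le> M * \<bar>\<xi>\<bar>" "\<bar>\<mu> - 3/4\<bar> + \<bar>\<xi>\<bar> \<le> M * \<bar>\<xi>\<bar>" "\<bar>\<mu>\<bar> + \<bar>\<xi>\<bar> \<le> M * \<bar>\<xi>\<bar>"
    proof -
      have "(\<bar>\<mu>\<bar> + 1) * 1 \<le> (\<bar>\<mu>\<bar> + 1) * \<bar>\<xi>\<bar>" using \<xi> by (intro mult_left_mono) auto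
      then show "\<bar>\<mu> + 3/4\<bar> + \<bar>\<xi>\<bar> \<le> M * \<bar>\<xi>\<bar>" "\<bar>\<mu> - 3/4\<bar> + \<bar>\<xi>\<bar> \<le> M * \<bar>\<xi>\<bar>" "\<bar>\<mu>\<bar> + \<bar>\<xi>\<bar> \<le> M * \<bar>\<xi>\<bar>"
        unfolding M_def by (auto simp: algebra_simps)
    qed
    moreover have "s + 3/4 = Complex (\<mu> + 3/4) \<xi>" "s - 3/4 = Complex (\<mu> - 3/4) \<xi>"
      using s by (simp_all add: complex_eq_iff)
    ultimately show "norm (s + 3/4) \<le> M * \<bar>\<xi>\<bar>" "norm (s - 3/4) \<le> M * \<bar>\<xi>\<bar>" "norm s \<le> M * \<bar>\<xi>\<bar>"
      using s by (metis order_trans)+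
    show "\<bar>\<xi>\<bar> \<le> norm (s + 3/4)" "\<bar>\<xi>\<bar> \<le> norm (s - 3/4)"
      using abs_Im_le_cmod[of "s + 3/4"] abs_Im_le_cmod[of "s - 3/4"] s by simp_all
  qed
  have sh: "Complex \<mu> \<xi> + 1 = Complex (\<mu> + 1) \<xi>" "Complex \<mu> \<xi> - 1 = Complex (\<mu> - 1) \<xi>" for \<xi>
    by (simp_all add: complex_eq_iff)
  {
    assume dm: "dec Khat (\<mu> - 1)"
    show "dec Khat (\<mu> + 1)" unfolding dec_def
    proof
      fix N
      obtain C1 where C1: "\<And>\<xi>. 1 \<le> \<bar>\<xi>\<bar> \<Longrightarrow> norm (Khat (Complex \<mu> \<xi>)) * \<bar>\<xi>\<bar> ^ N \<le> C1" using d0 unfolding dec_def by blast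
      obtain C2 where C2: "\<And>\<xi>. 1 \<le> \<bar>\<xi>\<bar> \<Longrightarrow> norm (Khat (Complex (\<mu> - 1) \<xi>)) * \<bar>\<xi>\<bar> ^ N \<le> C2" using dm unfolding dec_def by blast
      show "\<exists>C. \<forall>\<xi>. 1 \<le> \<bar>\<xi>\<bar> \<longrightarrow> norm (Khat (Complex (\<mu> + 1) \<xi>)) * \<bar>\<xi>\<bar> ^ N \<le> C"
      proof (intro exI allI impI)
        fix \<xi> :: real assume \<xi>: "1 \<le> \<bar>\<xi>\<bar>"
        define s where "s = Complex \<mu> \<xi>"
        have "Im s \<noteq> 0" using \<xi> by (auto simp: s_def)
        from R[OF this] have "norm (Khat (s + 1)) \<le> M * (\<bar>c\<bar> * norm (Khat s) + norm (Khat (s - 1)))"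
          by (rule rec_bound) (use nb[OF s_def \<xi>] \<xi> in auto)
        then have "norm (Khat (s + 1)) * \<bar>\<xi>\<bar> ^ N \<le> M * (\<bar>c\<bar> * C1 + C2)"
          by (rule scale_bound) (use C1[OF \<xi>] C2[OF \<xi>] in \<open>auto simp: s_def sh M_def\<close>)
        then show "norm (Khat (Complex (\<mu> + 1) \<xi>)) * \<bar>\<xi>\<bar> ^ N \<le> M * (\<bar>c\<bar> * C1 + C2)"
          by (simp add: s_def sh)
      qed
    qed
  }
  {
    assume dp: "dec Khat (\<mu> + 1)"
    show "dec Khat (\<mu> - 1)" unfolding dec_def
    proof
      fix N
      obtain C1 where C1: "\<And>\<xi>. 1 \<le> \<bar>\<xi>\<bar> \<Longrightarrow> norm (Khat (Complex \<mu> \<xi>)) * \<bar>\<xi>\<bar> ^ N \<le> C1" using d0 unfolding dec_def by blast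
      obtain C2 where C2: "\<And>\<xi>. 1 \<le> \<bar>\<xi>\<bar> \<Longrightarrow> norm (Khat (Complex (\<mu> + 1) \<xi>)) * \<bar>\<xi>\<bar> ^ N \<le> C2" using dp unfolding dec_def by blast
      show "\<exists>C. \<forall>\<xi>. 1 \<le> \<bar>\<xi>\<bar> \<longrightarrow> norm (Khat (Complex (\<mu> - 1) \<xi>)) * \<bar>\<xi>\<bar> ^ N \<le> C"
      proof (intro exI allI impI)
        fix \<xi> :: real assume \<xi>: "1 \<le> \<bar>\<xi>\<bar>"
        define s where "s = Complex \<mu> \<xi>"
        have "Im s \<noteq> 0" using \<xi> by (auto simp: s_def)
        from R[OF this] have "(s - 3/4) * Khat (s - 1) + (s + 3/4) * Khat (s + 1) = of_real c * s * Khat s"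
          by (simp add: add.commute)
        then have "norm (Khat (s - 1)) \<le> M * (\<bar>c\<bar> * norm (Khat s) + norm (Khat (s + 1)))"
          by (rule rec_bound) (use nb[OF s_def \<xi>] \<xi> in auto)
        then have "norm (Khat (s - 1)) * \<bar>\<xi>\<bar> ^ N \<le> M * (\<bar>c\<bar> * C1 + C2)"
          by (rule scale_bound) (use C1[OF \<xi>] C2[OF \<xi>] in \<open>auto simp: s_def sh M_def\<close>)
        then show "norm (Khat (Complex (\<mu> - 1) \<xi>)) * \<bar>\<xi>\<bar> ^ N \<le> M * (\<bar>c\<bar> * C1 + C2)"
          by (simp add: s_def sh)
      qed
    qed
  }
qed

lemma dec_all:
  assumes R: "\<And>s. Im s \<noteq> 0 \<Longrightarrow> (s + 3/4) * Khat (s + 1) + (s - 3/4) * Khat (s - 1) = of_real c * s * Khat s"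
    and base: "\<And>\<mu>. \<bar>\<mu>\<bar> < 5/4 \<Longrightarrow> dec Khat \<mu>"
  shows "dec Khat \<mu>"
proof -
  have "\<forall>\<mu>. \<bar>\<mu>\<bar> < 5/4 + real n \<longrightarrow> dec Khat \<mu>" for n
  proof (induction n)
    case 0 then show ?case using base by simp
  next
    case (Suc n)
    show ?case
    proof (intro allI impI)
      fix \<mu> :: real assume \<mu>: "\<bar>\<mu>\<bar> < 5/4 + real (Suc n)"
      consider "\<bar>\<mu>\<bar> < 5/4 + real n" | "\<mu> \<ge> 5/4 + real n" | "\<mu> \<le> -(5/4 + real n)" by linarith
      then show "dec Khat \<mu>"
      proof cases
        case 1 then show ?thesis using Suc by blast
      next
        case 2
        have a: "dec Khat (\<mu> - 1)" "dec Khat (\<mu> - 1 - 1)" using Suc 2 \<mu> by auto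
        show ?thesis using dec_step(1)[OF R a(1)] a(2) by simp
      next
        case 3
        have a: "dec Khat (\<mu> + 1)" "dec Khat (\<mu> + 1 + 1)" using Suc 3 \<mu> by auto
        show ?thesis using dec_step(2)[OF R a(1)] a(2) by simp
      qed
    qed
  qed
  moreover obtain n :: nat where "\<bar>\<mu>\<bar> < real n" using reals_Archimedean2 by blast
  then have "\<bar>\<mu>\<bar> < 5/4 + real n" by simp
  ultimately show ?thesis by blast
qed

lemma final_lim:
  fixes h :: "real \<Rightarrow> complex"
  assumes C: "\<And>\<xi>. 1 \<le> \<bar>\<xi>\<bar> \<Longrightarrow> norm (h \<xi>) * \<bar>\<xi>\<bar> ^ N \<le> C" and p: "0 \<le> p" "p < real N"
  shows "((\<lambda>\<xi>. (cmod (h \<xi>))\<^sup>2 * \<bar>\<xi>\<bar> powr (2 * p)) \<longlongrightarrow> 0) at_top"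
proof (rule tendsto_sandwich[of "\<lambda>_. 0" _ _ "\<lambda>\<xi>. C^2 * \<xi> powr (2 * p - 2 * real N)"])
  show "\<forall>\<^sub>F \<xi> in at_top. 0 \<le> (cmod (h \<xi>))\<^sup>2 * \<bar>\<xi>\<bar> powr (2 * p)" by simp
  show "\<forall>\<^sub>F \<xi> in at_top. (cmod (h \<xi>))\<^sup>2 * \<bar>\<xi>\<bar> powr (2 * p) \<le> C^2 * \<xi> powr (2 * p - 2 * real N)"
    unfolding eventually_at_top_linorder
  proof (intro exI[of _ 1] allI impI)
    fix \<xi> :: real assume \<xi>: "1 \<le> \<xi>"
    have a0: "0 \<le> norm (h \<xi>) * \<xi> ^ N" using \<xi> by simp
    have b0: "norm (h \<xi>) * \<xi> ^ N \<le> C" using C[of \<xi>] \<xi> by simp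
    have sq: "(norm (h \<xi>) * \<xi> ^ N)^2 \<le> C^2" using power_mono[OF b0 a0, of 2] .
    have "\<xi> powr (2 * real N) = \<xi> powr real (N * 2)" by (simp add: mult.commute)
    also have "\<dots> = \<xi> ^ (N * 2)" by (rule powr_realpow) (use \<xi> in auto)
    also have "\<dots> = (\<xi> ^ N)^2" by (rule power_mult)
    finally have "(norm (h \<xi>))^2 * \<xi> powr (2 * real N) = (norm (h \<xi>) * \<xi> ^ N)^2"
      by (simp add: power_mult_distrib)
    with sq have 1: "(norm (h \<xi>))^2 * \<xi> powr (2 * real N) \<le> C^2" by simp
    have "(cmod (h \<xi>))\<^sup>2 * \<bar>\<xi>\<bar> powr (2 * p) = ((norm (h \<xi>))^2 * \<xi> powr (2 * real N)) * \<xi> powr (2 * p - 2 * real N)"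
      using \<xi> by (simp add: powr_add[symmetric])
    also have "\<dots> \<le> C^2 * \<xi> powr (2 * p - 2 * real N)"
      using 1 by (intro mult_right_mono) auto
    finally show "(cmod (h \<xi>))\<^sup>2 * \<bar>\<xi>\<bar> powr (2 * p) \<le> C^2 * \<xi> powr (2 * p - 2 * real N)" .
  qed
  show "((\<lambda>_. 0) \<longlongrightarrow> (0::real)) at_top" by simp
  have "((\<lambda>\<xi>::real. \<xi> powr (2 * p - 2 * real N)) \<longlongrightarrow> 0) at_top"
    using p by (intro tendsto_neg_powr filterlim_ident) auto
  then show "((\<lambda>\<xi>::real. C^2 * \<xi> powr (2 * p - 2 * real N)) \<longlongrightarrow> 0) at_top"
    using tendsto_mult[OF tendsto_const[of "C^2"]] by fastforce
qed

lemma sig_choice: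
  assumes "Im s \<noteq> 0"
  shows "(if Im s > 0 then 1 else -1) = (1::real) \<or> (if Im s > 0 then 1 else -1) = (-1::real)"
    "0 < (if Im s > 0 then 1 else -1) * Im s"
  using assms by auto

theorem corollary2:
  fixes \<alpha> :: real and Khat :: "complex \<Rightarrow> complex"
  assumes "0 < \<alpha>" "\<alpha> < pi"
    and "Khat holomorphic_on (- Sfrak)"
    and "\<And>s. \<bar>Re s\<bar> < 1/4 \<Longrightarrow> Khat s = mellinK \<alpha> s"
  shows "\<forall>\<mu>::real. \<forall>p::real. p \<ge> 0 \<longrightarrow>
           ((\<lambda>\<xi>. (cmod (Khat (Complex \<mu> \<xi>)))\<^sup>2 * \<bar>\<xi>\<bar> powr (2 * p)) \<longlongrightarrow> 0) at_top \<and>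
           ((\<lambda>\<xi>. (cmod (Khat (Complex \<mu> (- \<xi>))))\<^sup>2 * \<bar>\<xi>\<bar> powr (2 * p)) \<longlongrightarrow> 0) at_top"
proof -
  define c where "c = cc \<alpha>"
  have cb: "-2 \<le> c" "c < 2" using cc_bounds[OF assms(1,2)] by (auto simp: c_def)
  define F where "F = Mel (K0 c)"
  have KF: "Khat s = F s" if "-1/4 < Re s" "Re s < 1/4" for s
  proof -
    have "Khat s = mellinK \<alpha> s" using assms(4) that by auto
    also have "\<dots> = Mel (Kfrak \<alpha>) s" unfolding mellinK_def Mel_def mi_def[abs_def] ..
    also have "\<dots> = F s" unfolding F_def K0_def c_def by (rule Mel_cong) (rule Kfrak_cls[OF assms(1,2)])
    finally show ?thesis .
  qed
  have holoK: "Khat holomorphic_on HS a b \<sigma>" for a b \<sigma>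
    using assms(3) HS_Sfrak holomorphic_on_subset by blast
  have G1: "(s + 1/4) * Khat s = Mel (H1 c) s" if "\<sigma> = 1 \<or> \<sigma> = -1" "s \<in> HS (-5/4) (1/4) \<sigma>" for s \<sigma>
  proof (rule HS_ident[OF that(1) _ _ _ _ _ that(2), where f = "\<lambda>s. (s + 1/4) * Khat s" and g = "Mel (H1 c)"])
    show "(\<lambda>s. (s + 1/4) * Khat s) holomorphic_on HS (-5/4) (1/4) \<sigma>" by (intro holomorphic_intros holoK)
    show "Mel (H1 c) holomorphic_on HS (-5/4) (1/4) \<sigma>"
      by (rule holomorphic_on_subset[OF H1_holo[OF cb]]) (auto simp: mem_HS)
    fix z assume z: "z \<in> HS (-1/4) (1/4) \<sigma>"
    then have zr: "-1/4 < Re z" "Re z < 1/4" by (auto simp: mem_HS)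
    show "(z + 1/4) * Khat z = Mel (H1 c) z" using KF[OF zr] rels(1)[OF cb zr] by (simp add: F_def)
  qed auto
  have G2: "(s - 1/4) * Khat s = Mel (H2 c) s" if "\<sigma> = 1 \<or> \<sigma> = -1" "s \<in> HS (-1/4) (5/4) \<sigma>" for s \<sigma>
  proof (rule HS_ident[OF that(1) _ _ _ _ _ that(2), where f = "\<lambda>s. (s - 1/4) * Khat s" and g = "Mel (H2 c)"])
    show "(\<lambda>s. (s - 1/4) * Khat s) holomorphic_on HS (-1/4) (5/4) \<sigma>" by (intro holomorphic_intros holoK)
    show "Mel (H2 c) holomorphic_on HS (-1/4) (5/4) \<sigma>"
      by (rule holomorphic_on_subset[OF H2_holo[OF cb]]) (auto simp: mem_HS)
    fix z assume z: "z \<in> HS (-1/4) (1/4) \<sigma>"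
    then have zr: "-1/4 < Re z" "Re z < 1/4" by (auto simp: mem_HS)
    show "(z - 1/4) * Khat z = Mel (H2 c) z" using KF[OF zr] rels(2)[OF cb zr] by (simp add: F_def)
  qed auto
  have hp: "(\<lambda>s. Khat (s + 1)) holomorphic_on HS a b \<sigma>" for a b \<sigma>
    using shift_holo[OF assms(3), of 1] by simp
  have hm: "(\<lambda>s. Khat (s - 1)) holomorphic_on HS a b \<sigma>" for a b \<sigma>
    using shift_holo[OF assms(3), of "-1"] by simp
  have Rec: "(s + 3/4) * Khat (s + 1) + (s - 3/4) * Khat (s - 1) = of_real c * s * Khat s" if "Im s \<noteq> 0" for s
  proof -
    define \<sigma> :: real where "\<sigma> = (if Im s > 0 then 1 else -1)"
    note sg = sig_choice[OF that, folded \<sigma>_def]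
    define L where "L = \<bar>Re s\<bar> + 1"
    have sL: "s \<in> HS (-L) L \<sigma>" using sg by (auto simp: mem_HS L_def)
    show ?thesis
    proof (rule HS_ident[OF sg(1) _ _ _ _ _ sL, where f = "\<lambda>s. (s + 3/4) * Khat (s + 1) + (s - 3/4) * Khat (s - 1)"
          and g = "\<lambda>s. of_real c * s * Khat s"])
      show "(\<lambda>s. (s + 3/4) * Khat (s + 1) + (s - 3/4) * Khat (s - 1)) holomorphic_on HS (-L) L \<sigma>"
        by (intro holomorphic_intros hp hm)
      show "(\<lambda>s. of_real c * s * Khat s) holomorphic_on HS (-L) L \<sigma>"
        by (intro holomorphic_intros holoK)
      fix z assume z: "z \<in> HS (-1/4) (1/4) \<sigma>"
      then have zr: "-1/4 < Re z" "Re z < 1/4" by (auto simp: mem_HS)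
      have z1: "z + 1 \<in> HS (-1/4) (5/4) \<sigma>" "z - 1 \<in> HS (-5/4) (1/4) \<sigma>" using z by (auto simp: mem_HS)
      have "(z + 3/4) * Khat (z + 1) = Mel (H2 c) (z + 1)"
        using G2[OF sg(1) z1(1)] by (simp add: algebra_simps)
      moreover have "(z - 3/4) * Khat (z - 1) = Mel (H1 c) (z - 1)"
        using G1[OF sg(1) z1(2)] by (simp add: algebra_simps)
      ultimately show "(z + 3/4) * Khat (z + 1) + (z - 3/4) * Khat (z - 1) = of_real c * z * Khat z"
        using rels(3)[OF cb zr] KF[OF zr] by (simp add: F_def)
    qed (auto simp: L_def)
  qed
  have base: "dec Khat \<mu>" if "\<bar>\<mu>\<bar> < 5/4" for \<mu>
  proof (cases "\<mu> < 1/4")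
    case True
    show ?thesis
    proof (rule base_dec[where a = "-5/4" and b = "1/4" and w = "1/4" and G = "Mel (H1 c)"])
      fix s :: complex assume s: "-5/4 < Re s" "Re s < 1/4" "Im s \<noteq> 0"
      define \<sigma> :: real where "\<sigma> = (if Im s > 0 then 1 else -1)"
      note sg = sig_choice[OF s(3), folded \<sigma>_def]
      show "(s + 1/4) * Khat s = Mel (H1 c) s" using G1[OF sg(1)] s sg(2) by (auto simp: mem_HS)
    next
      show "\<exists>C. \<forall>\<xi>. cmod (Complex \<mu> \<xi>) ^ N * cmod (Mel (H1 c) (Complex \<mu> \<xi>)) \<le> C" for N
        by (rule H1_decay[OF cb]) (use that True in auto)
    qed (use that True in auto)
  next
    case False
    show ?thesis
    proof (rule base_dec[where a = "-1/4" and b = "5/4" and w = "-1/4" and G = "Mel (H2 c)"])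
      fix s :: complex assume s: "-1/4 < Re s" "Re s < 5/4" "Im s \<noteq> 0"
      define \<sigma> :: real where "\<sigma> = (if Im s > 0 then 1 else -1)"
      note sg = sig_choice[OF s(3), folded \<sigma>_def]
      show "(s + -1/4) * Khat s = Mel (H2 c) s" using G2[OF sg(1)] s sg(2) by (auto simp: mem_HS)
    next
      show "\<exists>C. \<forall>\<xi>. cmod (Complex \<mu> \<xi>) ^ N * cmod (Mel (H2 c) (Complex \<mu> \<xi>)) \<le> C" for N
        by (rule H2_decay[OF cb]) (use that False in auto)
    qed (use that False in auto)
  qed
  have all: "dec Khat \<mu>" for \<mu> by (rule dec_all[OF Rec base])
  show ?thesis
  proof (intro allI impI conjI)
    fix \<mu> p :: real assume p: "0 \<le> p"
    define N where "N = nat \<lceil>p\<rceil> + 1"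
    have pN: "p < real N" unfolding N_def using real_nat_ceiling_ge[of p] by simp
    obtain C where C: "\<And>\<xi>. 1 \<le> \<bar>\<xi>\<bar> \<Longrightarrow> norm (Khat (Complex \<mu> \<xi>)) * \<bar>\<xi>\<bar> ^ N \<le> C"
      using all[of \<mu>] unfolding dec_def by blast
    show "((\<lambda>\<xi>. (cmod (Khat (Complex \<mu> \<xi>)))\<^sup>2 * \<bar>\<xi>\<bar> powr (2 * p)) \<longlongrightarrow> 0) at_top"
      by (rule final_lim[where N = N and C = C]) (use C p pN in auto)
    have C': "norm (Khat (Complex \<mu> (- \<xi>))) * \<bar>\<xi>\<bar> ^ N \<le> C" if "1 \<le> \<bar>\<xi>\<bar>" for \<xi>
      using C[of "-\<xi>"] that by simp
    show "((\<lambda>\<xi>. (cmod (Khat (Complex \<mu> (- \<xi>))))\<^sup>2 * \<bar>\<xi>\<bar> powr (2 * p)) \<longlongrightarrow> 0) at_top"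
      by (rule final_lim[where N = N and C = C]) (use C' p pN in auto)
  qed
qed

end
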